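(* Let $X$ be a metric space, $\mathcal M=\{M_1,\dots,M_n\}\subset\mathcal P^f_{\mathrm{Cl}}(X)$, $\Sigma(\mathcal M)\ne\emptyset$ and $d\in\Omega(\mathcal M)$. Then $K_d\in\Sigma_d(\mathcal M)$ and $K\subset K_d$ for every $K\in\Sigma_d(\mathcal M)$; i.e. $K_d$ is the greatest element of $\Sigma_d(\mathcal M)$ with respect to inclusion.
   Context: For a metric space $X$, $p\in X$, $A\subset X$: $|p\,A|=\inf_{a\in A}|p\,a|$ ($=\infty$ if $A=\emptyset$); for $0\le r<\infty$, $B_r(A)=\{p:|p\,A|\le r\}$. For nonempty $A,B$, $d_H(A,B)=\max\{\sup_{a\in A}|a\,B|,\sup_{b\in B}|b\,A|\}\in[0,\infty]$. $\mathcal P_{\mathrm{Cl}}(X)$ is the set of nonempty closed subsets of $X$ with $d_H$. A finiteness class of $\mathcal P_{\mathrm{Cl}}(X)$ is an equivalence class of the relation $A\sim B\iff d_H(A,B)<\infty$; $\mathcal P^f_{\mathrm{Cl}}(X)$ denotes a fixed finiteness class. For finite $\mathcal M=\{M_1,\dots,M_n\}\subset\mathcal P^f_{\mathrm{Cl}}(X)$, set $S_{\mathcal M}(Y)=\sum_{i=1}^n d_H(Y,M_i)$ for $Y\in\mathcal P^f_{\mathrm{Cl}}(X)$; $\Sigma(\mathcal M)$ is the set of all minimizers of $S_{\mathcal M}$ over $\mathcal P^f_{\mathrm{Cl}}(X)$. For $K\in\Sigma(\mathcal M)$, $d(K)=(d_H(K,M_1),\dots,d_H(K,M_n))$; $\Omega(\mathcal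 M)=\{d(K):K\in\Sigma(\mathcal M)\}$; for $d=(d_1,\dots,d_n)\in\Omega(\mathcal M)$, $\Sigma_d(\mathcal M)=\{K\in\Sigma(\mathcal M):d(K)=d\}$, partially ordered by inclusion; and $K_d=\bigcap_{i=1}^n B_{d_i}(M_i)$. *)

theory Defs
  imports "HOL-Analysis.Analysis"
begin

definition pt_set_dist :: "'a::metric_space \<Rightarrow> 'a set \<Rightarrow> ereal" where
  "pt_set_dist p A = (if A = {} then \<infinity> else ereal (INF a\<in>A. dist p a))"

definition nbhd :: "real \<Rightarrow> 'a::metric_space set \<Rightarrow> 'a set" where
  "nbhd r A = {p. pt_set_dist p A \<le> ereal r}"

definition hdist :: "'a::metric_space set \<Rightarrow> 'a set \<Rightarrow> ereal" where
  "hdist A B = max (SUP a\<in>A. pt_set_dist a B) (SUP b\<in>B. pt_set_dist b A)"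

definition PCl :: "'a::metric_space set set" where
  "PCl = {A. closed A \<and> A \<noteq> {}}"

definition finiteness_class :: "'a::metric_space set set \<Rightarrow> bool" where
  "finiteness_class F \<longleftrightarrow> (\<exists>C\<in>PCl. F = {A\<in>PCl. hdist A C < \<infinity>})"

definition SM :: "nat \<Rightarrow> (nat \<Rightarrow> 'a::metric_space set) \<Rightarrow> 'a set \<Rightarrow> ereal" where
  "SM n M Y = (\<Sum>i<n. hdist Y (M i))"

definition Sigma_min :: "'a::metric_space set set \<Rightarrow> nat \<Rightarrow> (nat \<Rightarrow> 'a set) \<Rightarrow> 'a set set" where
  "Sigma_min F n M = {K\<in>F. \<forall>Y\<in>F. SM n M K \<le> SM n M Y}"

text \<open>Omega(M): distance vectors d(K) of minimizers (entries beyond n are irrelevant).\<close>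
definition Omega :: "'a::metric_space set set \<Rightarrow> nat \<Rightarrow> (nat \<Rightarrow> 'a set) \<Rightarrow> (nat \<Rightarrow> real) set" where
  "Omega F n M = {d. \<exists>K\<in>Sigma_min F n M. \<forall>i<n. hdist K (M i) = ereal (d i)}"

definition Sigma_d :: "'a::metric_space set set \<Rightarrow> nat \<Rightarrow> (nat \<Rightarrow> 'a set) \<Rightarrow> (nat \<Rightarrow> real) \<Rightarrow> 'a set set" where
  "Sigma_d F n M d = {K\<in>Sigma_min F n M. \<forall>i<n. hdist K (M i) = ereal (d i)}"

definition K_d :: "nat \<Rightarrow> (nat \<Rightarrow> 'a::metric_space set) \<Rightarrow> (nat \<Rightarrow> real) \<Rightarrow> 'a set" where
  "K_d n M d = (\<Inter>i<n. nbhd (d i) (M i))"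

end

theory Submission
  imports Defs
begin

lemma psd_ne: "A \<noteq> {} \<Longrightarrow> pt_set_dist p A = ereal (infdist p A)"
  by (simp add: pt_set_dist_def infdist_notempty)

lemma hdist_nonneg:
  assumes "A \<noteq> {}" "B \<noteq> {}" shows "0 \<le> hdist A B"
proof -
  obtain a where a: "a \<in> A" using assms by blast
  have "0 \<le> pt_set_dist a B" using assms by (simp add: psd_ne infdist_nonneg)
  also have "\<dots> \<le> (SUP a\<in>A. pt_set_dist a B)" using a by (rule SUP_upper)
  finally show ?thesis unfolding hdist_def using max.cobounded1 order_trans by blast
qed

lemma hdist_le_iff:
  assumes "A \<noteq> {}" "B \<noteq> {}"
  shows "hdist A B \<le> ereal r \<longleftrightarrow> (\<forall>a\<in>A. infdist a B \<le> r) \<and> (\<forall>b\<in>B. infdist b A \<le> r)"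
  using assms unfolding hdist_def by (simp add: psd_ne SUP_le_iff)

lemma infdist_trans:
  assumes "B \<noteq> {}" "infdist a B \<le> r" "\<forall>b\<in>B. infdist b C \<le> s"
  shows "infdist a C \<le> r + s"
proof -
  have "\<forall>b\<in>B. infdist a C - s \<le> dist a b"
    using assms(3) infdist_triangle[of a C] by (smt (verit) dist_commute)
  hence "infdist a C - s \<le> infdist a B"
    using assms(1) by (simp add: infdist_notempty cINF_greatest)
  thus ?thesis using assms(2) by simp
qed

lemma hdist_fin:
  assumes "A \<noteq> {}" "B \<noteq> {}" "hdist A B < \<infinity>"
  obtains r where "hdist A B \<le> ereal r"
  using assms(3) by (cases "hdist A B") auto

lemma hdist_trans_fin:
  assumes "A \<noteq> {}" "B \<noteq> {}" "C \<noteq> {}" "hdist A B < \<infinity>" "hdist B C < \<infinity>"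
  shows "hdist A C < \<infinity>"
proof -
  obtain r where r: "hdist A B \<le> ereal r" using hdist_fin assms by blast
  obtain s where s: "hdist B C \<le> ereal s" using hdist_fin assms by blast
  have "hdist A C \<le> ereal (r + s)"
    unfolding hdist_le_iff[OF assms(1,3)]
  proof (intro conjI ballI)
    fix a assume a: "a \<in> A"
    have "infdist a B \<le> r" using r hdist_le_iff[OF assms(1,2)] a by blast
    moreover have "\<forall>b\<in>B. infdist b C \<le> s" using s hdist_le_iff[OF assms(2,3)] by blast
    ultimately show "infdist a C \<le> r + s" using infdist_trans[OF assms(2)] by blast
  next
    fix c assume c: "c \<in> C"
    have "infdist c B \<le> s" using s hdist_le_iff[OF assms(2,3)] c by blast
    moreover have "\<forall>b\<in>B. infdist b A \<le> r" using r hdist_le_iff[OF assms(1,2)] by blast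
    ultimately have "infdist c A \<le> s + r" using infdist_trans[OF assms(2)] by blast
    thus "infdist c A \<le> r + s" by simp
  qed
  thus ?thesis using order.strict_trans1 by fastforce
qed

theorem mainTheorem11:
  fixes F :: "'a::metric_space set set" and n :: nat
    and M :: "nat \<Rightarrow> 'a set" and d :: "nat \<Rightarrow> real"
  assumes "finiteness_class F"
    and "n \<ge> 1"
    and "\<forall>i<n. M i \<in> F"
    and "Sigma_min F n M \<noteq> {}"
    and "d \<in> Omega F n M"
  shows "K_d n M d \<in> Sigma_d F n M d \<and> (\<forall>K\<in>Sigma_d F n M d. K \<subseteq> K_d n M d)"
proof -
  obtain C where C: "C \<in> PCl" and FC: "F = {A\<in>PCl. hdist A C < \<infinity>}"
    using assms(1) unfolding finiteness_class_def by blast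
  have Mne: "M i \<noteq> {}" "closed (M i)" if "i < n" for i
    using assms(3) that FC by (auto simp: PCl_def)
  have nb: "nbhd r A = {p. infdist p A \<le> r}" if "A \<noteq> {}" for r and A :: "'a set"
    using that by (simp add: nbhd_def psd_ne)
  have sub: "K \<subseteq> K_d n M d" if "K \<in> Sigma_d F n M d" for K
  proof
    fix x assume x: "x \<in> K"
    have Kne: "K \<noteq> {}" using x by blast
    show "x \<in> K_d n M d" unfolding K_d_def
    proof
      fix i assume i: "i \<in> {..<n}"
      have "hdist K (M i) \<le> ereal (d i)" using that i by (simp add: Sigma_d_def)
      hence "infdist x (M i) \<le> d i" using hdist_le_iff[OF Kne Mne(1)] x i by auto
      thus "x \<in> nbhd (d i) (M i)" using nb[OF Mne(1)] i by auto
    qed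
  qed
  obtain K where K: "K \<in> Sigma_min F n M" and Kd: "\<forall>i<n. hdist K (M i) = ereal (d i)"
    using assms(5) unfolding Omega_def by blast
  have KS: "K \<in> Sigma_d F n M d" using K Kd by (simp add: Sigma_d_def)
  have KF: "K \<in> F" using K by (simp add: Sigma_min_def)
  hence Kne: "K \<noteq> {}" using FC by (auto simp: PCl_def)
  define L where "L = K_d n M d"
  have KL: "K \<subseteq> L" using sub KS L_def by blast
  hence Lne: "L \<noteq> {}" using Kne by blast
  have Lcl: "closed L" unfolding L_def K_d_def
  proof (intro closed_INT ballI)
    fix i assume i: "i \<in> {..<n}"
    have i': "i < n" using i by simp
    have "closed {p. infdist p (M i) \<le> d i}"
      by (rule closed_Collect_le[OF continuous_on_infdist[OF continuous_on_id] continuous_on_const])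
    thus "closed (nbhd (d i) (M i))" using nb[OF Mne(1)[OF i']] by simp
  qed
  have Lle: "hdist L (M i) \<le> ereal (d i)" if i: "i < n" for i
  proof -
    have h: "hdist K (M i) \<le> ereal (d i)" using Kd i by simp
    have "\<forall>a\<in>L. infdist a (M i) \<le> d i"
      using i nb[OF Mne(1)] unfolding L_def K_d_def by auto
    moreover have "\<forall>b\<in>M i. infdist b L \<le> d i"
    proof
      fix b assume b: "b \<in> M i"
      have "infdist b L \<le> infdist b K" using infdist_mono[OF KL Kne] .
      also have "\<dots> \<le> d i" using h hdist_le_iff[OF Kne Mne(1)[OF i]] b by auto
      finally show "infdist b L \<le> d i" .
    qed
    ultimately show ?thesis using hdist_le_iff[OF Lne Mne(1)[OF i]] by blast
  qed
  have LF: "L \<in> F"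
  proof -
    have n0: "0 < n" using assms(2) by simp
    have "hdist L (M 0) < \<infinity>" using Lle[OF n0] using order.strict_trans1 by fastforce
    moreover have "hdist (M 0) C < \<infinity>" using assms(3) n0 FC by auto
    ultimately have "hdist L C < \<infinity>"
      using hdist_trans_fin[OF Lne Mne(1)[OF n0]] C by (auto simp: PCl_def)
    thus ?thesis using FC Lcl Lne by (simp add: PCl_def)
  qed
  have "SM n M K \<le> SM n M L" using K LF by (simp add: Sigma_min_def)
  moreover have "SM n M L \<le> SM n M K" unfolding SM_def
  proof (rule sum_mono)
    fix i assume "i \<in> {..<n}"
    thus "hdist L (M i) \<le> hdist K (M i)" using Lle Kd by simp
  qed
  ultimately have eqS: "SM n M L = SM n M K" by simp
  have fin: "\<exists>e. hdist L (M i) = ereal e" if i: "i < n" for i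
  proof -
    have "0 \<le> hdist L (M i)" using hdist_nonneg[OF Lne Mne(1)[OF i]] .
    thus ?thesis using Lle[OF i] by (cases "hdist L (M i)") auto
  qed
  define e where "e i = real_of_ereal (hdist L (M i))" for i
  have he: "hdist L (M i) = ereal (e i)" if ii: "i < n" for i
  proof -
    obtain x where "hdist L (M i) = ereal x" using fin[OF ii] by blast
    thus ?thesis unfolding e_def by simp
  qed
  have "SM n M L = (\<Sum>i<n. ereal (e i))" unfolding SM_def
    using he by (intro sum.cong) auto
  hence s1: "SM n M L = ereal (\<Sum>i<n. e i)" by simp
  have "SM n M K = (\<Sum>i<n. ereal (d i))" unfolding SM_def
    using Kd by (intro sum.cong) auto
  hence s2: "SM n M K = ereal (\<Sum>i<n. d i)" by simp
  have "(\<Sum>i<n. e i) = (\<Sum>i<n. d i)" using eqS s1 s2 by simp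
  moreover have "\<And>i. i \<in> {..<n} \<Longrightarrow> e i \<le> d i" using Lle he by (metis ereal_less_eq(3) lessThan_iff)
  ultimately have "e i = d i" if "i < n" for i
    using sum_mono_inv[of e "{..<n}" d i] that by auto
  hence Ld: "\<forall>i<n. hdist L (M i) = ereal (d i)" using he by simp
  have "L \<in> Sigma_min F n M"
    using LF eqS K by (simp add: Sigma_min_def)
  hence "L \<in> Sigma_d F n M d" using Ld by (simp add: Sigma_d_def)
  thus ?thesis using sub L_def by blast
qed

end
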